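(* If a symmetric restaking network $G$ admits a profitable attack, then it admits a profitable attack that is consolidated.
   Context: A restaking network is a tuple $G=(V,S,\sigma,w,\theta,\pi)$ with finite nonempty validator set $V$, finite service set $S$, stake $\sigma:V\to\mathbb{R}_{>0}$, allocation $w:V\times S\to\mathbb{R}_{\ge0}$ with $w(v,s)\le\sigma(v)$, thresholds $\theta:S\to[0,1]$, prizes $\pi:S\to\mathbb{R}_{>0}$. An attack is $\alpha:V\times S\to\mathbb{R}_{\ge0}$ with $\alpha(v,s)\le w(v,s)$; attacked services $S_\alpha=\{s:\sum_v\alpha(v,s)\ge\theta(s)\sum_v w(v,s)\}$; validator cost $c_v(\alpha)=\min(\sigma(v),\sum_{s\in S_\alpha}\alpha(v,s))$; total cost $C(\alpha)=\sum_vc_v(\alpha)$; prize $\Pi(\alpha)=\sum_{s\in S_\alpha}\pi(s)$. Profitable: $S_\alpha\ne\emptyset$ and $C(\alpha)\le\Pi(\alpha)$. $G$ is symmetric if all validators have the same stake $\sigma$, for each $s$ all validators have the same allocation $w(s)$, and all services have the same threshold $\theta$. Let $m=|V|$ and $V=\{v_1,\dots,v_m\}$ (any ordering). An attack is consolidated if for every $s\in S_\alpha$ and $i\in\{1,\dots,m\}$: $\alpha(v_i,s)=w(s)$ if $i\le\lfloor\theta m\rfloor$; $\alpha(v_i,s)=(\theta m-\lfloor\theta m\rfloor)w(s)$ if $i=\lfloor\theta m\rfloor+1$; $\alpha(v_i,s)=0$ otherwise. *)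

theory Defs
  imports Complex_Main
begin

text \<open>A restaking network over validator set V and service set S.
  stake, alloc, thr, prize are the maps sigma, w, theta, pi.\<close>

definition restaking_network ::
  "'v set \<Rightarrow> 's set \<Rightarrow> ('v \<Rightarrow> real) \<Rightarrow> ('v \<Rightarrow> 's \<Rightarrow> real) \<Rightarrow> ('s \<Rightarrow> real) \<Rightarrow> ('s \<Rightarrow> real) \<Rightarrow> bool"
  where "restaking_network V S \<sigma> w \<theta> \<pi> \<longleftrightarrow>
     finite V \<and> V \<noteq> {} \<and> finite S \<and>
     (\<forall>v\<in>V. \<sigma> v > 0) \<and>
     (\<forall>v\<in>V. \<forall>s\<in>S. 0 \<le> w v s \<and> w v s \<le> \<sigma> v) \<and>
     (\<forall>s\<in>S. 0 \<le> \<theta> s \<and> \<theta> s \<le> 1) \<and>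
     (\<forall>s\<in>S. \<pi> s > 0)"

definition is_attack ::
  "'v set \<Rightarrow> 's set \<Rightarrow> ('v \<Rightarrow> 's \<Rightarrow> real) \<Rightarrow> ('v \<Rightarrow> 's \<Rightarrow> real) \<Rightarrow> bool"
  where "is_attack V S w \<alpha> \<longleftrightarrow> (\<forall>v\<in>V. \<forall>s\<in>S. 0 \<le> \<alpha> v s \<and> \<alpha> v s \<le> w v s)"

definition attacked ::
  "'v set \<Rightarrow> 's set \<Rightarrow> ('v \<Rightarrow> 's \<Rightarrow> real) \<Rightarrow> ('s \<Rightarrow> real) \<Rightarrow> ('v \<Rightarrow> 's \<Rightarrow> real) \<Rightarrow> 's set"
  where "attacked V S w \<theta> \<alpha> = {s\<in>S. (\<Sum>v\<in>V. \<alpha> v s) \<ge> \<theta> s * (\<Sum>v\<in>V. w v s)}"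

definition attack_cost ::
  "'v set \<Rightarrow> 's set \<Rightarrow> ('v \<Rightarrow> real) \<Rightarrow> ('v \<Rightarrow> 's \<Rightarrow> real) \<Rightarrow> ('s \<Rightarrow> real) \<Rightarrow> ('v \<Rightarrow> 's \<Rightarrow> real) \<Rightarrow> real"
  where "attack_cost V S \<sigma> w \<theta> \<alpha> =
     (\<Sum>v\<in>V. min (\<sigma> v) (\<Sum>s\<in>attacked V S w \<theta> \<alpha>. \<alpha> v s))"

definition attack_prize ::
  "'v set \<Rightarrow> 's set \<Rightarrow> ('v \<Rightarrow> 's \<Rightarrow> real) \<Rightarrow> ('s \<Rightarrow> real) \<Rightarrow> ('s \<Rightarrow> real) \<Rightarrow> ('v \<Rightarrow> 's \<Rightarrow> real) \<Rightarrow> real"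
  where "attack_prize V S w \<theta> \<pi> \<alpha> = (\<Sum>s\<in>attacked V S w \<theta> \<alpha>. \<pi> s)"

definition profitable ::
  "'v set \<Rightarrow> 's set \<Rightarrow> ('v \<Rightarrow> real) \<Rightarrow> ('v \<Rightarrow> 's \<Rightarrow> real) \<Rightarrow> ('s \<Rightarrow> real) \<Rightarrow> ('s \<Rightarrow> real) \<Rightarrow> ('v \<Rightarrow> 's \<Rightarrow> real) \<Rightarrow> bool"
  where "profitable V S \<sigma> w \<theta> \<pi> \<alpha> \<longleftrightarrow>
     is_attack V S w \<alpha> \<and> attacked V S w \<theta> \<alpha> \<noteq> {} \<and>
     attack_cost V S \<sigma> w \<theta> \<alpha> \<le> attack_prize V S w \<theta> \<pi> \<alpha>"

definition symmetric_network ::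
  "'v set \<Rightarrow> 's set \<Rightarrow> ('v \<Rightarrow> real) \<Rightarrow> ('v \<Rightarrow> 's \<Rightarrow> real) \<Rightarrow> ('s \<Rightarrow> real) \<Rightarrow> bool"
  where "symmetric_network V S \<sigma> w \<theta> \<longleftrightarrow>
     (\<forall>u\<in>V. \<forall>v\<in>V. \<sigma> u = \<sigma> v) \<and>
     (\<forall>s\<in>S. \<forall>u\<in>V. \<forall>v\<in>V. w u s = w v s) \<and>
     (\<forall>s\<in>S. \<forall>t\<in>S. \<theta> s = \<theta> t)"

definition consolidated ::
  "'v set \<Rightarrow> 's set \<Rightarrow> ('v \<Rightarrow> 's \<Rightarrow> real) \<Rightarrow> ('s \<Rightarrow> real) \<Rightarrow> (nat \<Rightarrow> 'v) \<Rightarrow> ('v \<Rightarrow> 's \<Rightarrow> real) \<Rightarrow> bool"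
  where "consolidated V S w \<theta> vs \<alpha> \<longleftrightarrow>
     (\<forall>s\<in>attacked V S w \<theta> \<alpha>. \<forall>i\<in>{1..card V}.
        \<alpha> (vs i) s =
          (if i \<le> nat \<lfloor>\<theta> s * real (card V)\<rfloor> then w (vs i) s
           else if i = nat \<lfloor>\<theta> s * real (card V)\<rfloor> + 1
             then (\<theta> s * real (card V) - of_int \<lfloor>\<theta> s * real (card V)\<rfloor>) * w (vs i) s
           else 0))"

end

theory Submission
  imports Defs
begin

lemma sumQ:
  fixes a b :: real
  shows "(\<Sum>i\<in>{1..m}. if i \<le> k then a else if i = Suc k then b else 0) = (if k < m then real k * a + b else real m * a)"
proof (induction m)
  case 0 then show ?case by simp
next
  case (Suc m)
  show ?case using Suc by (auto simp: sum.cl_ivl_Suc algebra_simps)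
qed

lemma lb:
  fixes x :: "'v \<Rightarrow> real"
  assumes "finite V" "\<forall>v\<in>V. 0 \<le> x v \<and> x v \<le> W" "0 \<le> W" "\<sigma> > 0" "0 \<le> f" "f \<le> 1"
    "(real k + f) * W \<le> (\<Sum>v\<in>V. x v)"
  shows "real k * min \<sigma> W + min \<sigma> (f * W) \<le> (\<Sum>v\<in>V. min \<sigma> (x v))"
proof (cases "W \<le> \<sigma>")
  case True
  have fW: "f*W \<le> W" using mult_right_mono[OF assms(6) assms(3)] by simp
  have "(\<Sum>v\<in>V. min \<sigma> (x v)) = (\<Sum>v\<in>V. x v)" using assms True by (intro sum.cong) auto
  moreover have "min \<sigma> W = W" "min \<sigma> (f*W) = f*W" using True fW by auto
  ultimately show ?thesis using assms(7) by (simp add: algebra_simps)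
next
  case False
  define Sa where "Sa = {v\<in>V. \<sigma> \<le> x v}"
  have fin: "finite Sa" "Sa \<subseteq> V" using assms(1) by (auto simp: Sa_def)
  have split: "(\<Sum>v\<in>V. min \<sigma> (x v)) = (\<Sum>v\<in>V-Sa. min \<sigma> (x v)) + (\<Sum>v\<in>Sa. min \<sigma> (x v))"
    using sum.subset_diff[OF fin(2) assms(1)] by simp
  have "(\<Sum>v\<in>Sa. min \<sigma> (x v)) = (\<Sum>v\<in>Sa. \<sigma>)" by (intro sum.cong) (auto simp: Sa_def)
  then have e1: "(\<Sum>v\<in>Sa. min \<sigma> (x v)) = real (card Sa) * \<sigma>" by simp
  have e2: "(\<Sum>v\<in>V-Sa. min \<sigma> (x v)) = (\<Sum>v\<in>V-Sa. x v)" by (intro sum.cong) (auto simp: Sa_def)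
  have e3: "(\<Sum>v\<in>V. x v) = (\<Sum>v\<in>V-Sa. x v) + (\<Sum>v\<in>Sa. x v)" using sum.subset_diff[OF fin(2) assms(1)] .
  have e4: "(\<Sum>v\<in>Sa. x v) \<le> real (card Sa) * W" using sum_bounded_above[of Sa x W] fin assms(2) by auto
  have nn: "0 \<le> (\<Sum>v\<in>V-Sa. x v)" using assms(2) by (intro sum_nonneg) auto
  have mW: "min \<sigma> W = \<sigma>" using False by simp
  show ?thesis
  proof (cases "real k + 1 \<le> real (card Sa)")
    case True
    have "real k * min \<sigma> W + min \<sigma> (f*W) \<le> real k * \<sigma> + \<sigma>" using mW by simp
    also have "\<dots> = (real k + 1) * \<sigma>" by (simp add: algebra_simps)
    also have "\<dots> \<le> real (card Sa) * \<sigma>" using True assms(4) by (intro mult_right_mono) auto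
    also have "\<dots> \<le> (\<Sum>v\<in>V. min \<sigma> (x v))" using split e1 e2 nn by simp
    finally show ?thesis .
  next
    case F2: False
    have "card Sa < Suc k" using F2 by (metis not_le of_nat_Suc of_nat_le_iff add.commute)
    then have ck: "real (card Sa) \<le> real k" by simp
    have p: "0 \<le> (real k - real (card Sa)) * (W - \<sigma>)" using ck False by (intro mult_nonneg_nonneg) auto
    have "(\<Sum>v\<in>V. min \<sigma> (x v)) \<ge> real (card Sa) * \<sigma> + (real k + f) * W - real (card Sa) * W"
      using split e1 e2 e3 e4 assms(7) by linarith
    moreover have "real (card Sa) * \<sigma> + (real k + f) * W - real (card Sa) * W \<ge> real k * \<sigma> + f * W"
      using p by (simp add: algebra_simps)
    moreover have "min \<sigma> (f*W) \<le> f * W" by simp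
    ultimately show ?thesis using mW by linarith
  qed
qed

theorem mainTheorem12:
  fixes V :: "'v set" and S :: "'s set"
    and \<sigma> :: "'v \<Rightarrow> real" and w :: "'v \<Rightarrow> 's \<Rightarrow> real"
    and \<theta> :: "'s \<Rightarrow> real" and \<pi> :: "'s \<Rightarrow> real"
    and vs :: "nat \<Rightarrow> 'v"
  assumes "restaking_network V S \<sigma> w \<theta> \<pi>"
    and "symmetric_network V S \<sigma> w \<theta>"
    and "bij_betw vs {1..card V} V"
    and "\<exists>\<alpha>. profitable V S \<sigma> w \<theta> \<pi> \<alpha>"
  shows "\<exists>\<alpha>. profitable V S \<sigma> w \<theta> \<pi> \<alpha> \<and> consolidated V S w \<theta> vs \<alpha>"
proof -
  from assms(4) obtain \<alpha> where pa: "profitable V S \<sigma> w \<theta> \<pi> \<alpha>" by blast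
  define A where "A = attacked V S w \<theta> \<alpha>"
  define m where "m = card V"
  have finV: "finite V" and Vne: "V \<noteq> {}" and finS: "finite S"
    and spos: "\<forall>v\<in>V. \<sigma> v > 0" and wb: "\<forall>v\<in>V. \<forall>s\<in>S. 0 \<le> w v s \<and> w v s \<le> \<sigma> v"
    and thb: "\<forall>s\<in>S. 0 \<le> \<theta> s \<and> \<theta> s \<le> 1" and ppos: "\<forall>s\<in>S. \<pi> s > 0"
    using assms(1) unfolding restaking_network_def by auto
  have symd: "(\<forall>u\<in>V. \<forall>v\<in>V. \<sigma> u = \<sigma> v) \<and> (\<forall>s\<in>S. \<forall>u\<in>V. \<forall>v\<in>V. w u s = w v s)
    \<and> (\<forall>s\<in>S. \<forall>t\<in>S. \<theta> s = \<theta> t)"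
    using assms(2) unfolding symmetric_network_def .
  note seq = symd[THEN conjunct1] and weq = symd[THEN conjunct2, THEN conjunct1]
    and theq = symd[THEN conjunct2, THEN conjunct2]
  have isa: "is_attack V S w \<alpha>" and Ane: "A \<noteq> {}" and costa: "attack_cost V S \<sigma> w \<theta> \<alpha> \<le> attack_prize V S w \<theta> \<pi> \<alpha>"
    using pa unfolding profitable_def A_def by auto
  have AS: "A \<subseteq> S" unfolding A_def attacked_def by auto
  have finA: "finite A" using AS finS finite_subset by blast
  obtain s0 where s0: "s0 \<in> A" using Ane by blast
  define \<theta>0 where "\<theta>0 = \<theta> s0"
  have m1: "1 \<le> m" using finV Vne unfolding m_def by (simp add: Suc_le_eq card_gt_0_iff)
  have bij: "bij_betw vs {1..m} V" using assms(3) m_def by simp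
  have vs1: "vs 1 \<in> V" using bij_betw_apply[OF bij] m1 by auto
  define w0 where "w0 s = w (vs 1) s" for s
  define \<sigma>0 where "\<sigma>0 = \<sigma> (vs 1)"
  have wv: "\<And>v s. v\<in>V \<Longrightarrow> s\<in>S \<Longrightarrow> w v s = w0 s" using weq vs1 unfolding w0_def by blast
  have sv: "\<And>v. v\<in>V \<Longrightarrow> \<sigma> v = \<sigma>0" using seq vs1 unfolding \<sigma>0_def by blast
  have s0pos: "\<sigma>0 > 0" using spos vs1 unfolding \<sigma>0_def by blast
  have ths: "\<And>s. s\<in>S \<Longrightarrow> \<theta> s = \<theta>0" using theq s0 AS unfolding \<theta>0_def by blast
  have th0: "0 \<le> \<theta>0" "\<theta>0 \<le> 1" using thb s0 AS unfolding \<theta>0_def by auto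
  have w0nn: "\<And>s. s\<in>S \<Longrightarrow> 0 \<le> w0 s" using wb vs1 unfolding w0_def by blast
  define k where "k = nat \<lfloor>\<theta>0 * real m\<rfloor>"
  define f where "f = \<theta>0 * real m - of_int \<lfloor>\<theta>0 * real m\<rfloor>"
  have tm0: "0 \<le> \<theta>0 * real m" using th0 by simp
  have kf: "real k + f = \<theta>0 * real m" using tm0 unfolding k_def f_def by simp
  have f01: "0 \<le> f" "f < 1" unfolding f_def using floor_correct[of "\<theta>0 * real m"] by linarith+
  have tmm: "\<theta>0 * real m \<le> real m" using mult_right_mono[OF th0(2), of "real m"] by simp
  have km: "k \<le> m"
  proof -
    have "\<lfloor>\<theta>0 * real m\<rfloor> \<le> int m" using tmm by (metis floor_mono floor_of_nat)
    then show ?thesis unfolding k_def by simp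
  qed
  define inv where "inv = the_inv_into {1..m} vs"
  have inv_in: "\<And>v. v \<in> V \<Longrightarrow> inv v \<in> {1..m}"
    using bij_betw_apply[OF bij_betw_the_inv_into[OF bij]] unfolding inv_def by blast
  have vs_inv: "\<And>v. v\<in>V \<Longrightarrow> vs (inv v) = v"
    using f_the_inv_into_f_bij_betw[OF bij] unfolding inv_def by blast
  have inv_vs: "\<And>i. i\<in>{1..m} \<Longrightarrow> inv (vs i) = i"
    using the_inv_into_f_f[OF bij_betw_imp_inj_on[OF bij]] unfolding inv_def by blast
  have sumV: "(\<Sum>v\<in>V. F (inv v)) = (\<Sum>i\<in>{1..m}. F i)" for F :: "nat \<Rightarrow> real"
  proof -
    have "(\<Sum>i\<in>{1..m}. F (inv (vs i))) = (\<Sum>v\<in>V. F (inv v))"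
      using sum.reindex_bij_betw[OF bij, of "\<lambda>v. F (inv v)"] .
    moreover have "(\<Sum>i\<in>{1..m}. F (inv (vs i))) = (\<Sum>i\<in>{1..m}. F i)"
      using inv_vs by (intro sum.cong) auto
    ultimately show ?thesis by simp
  qed
  define Q where "Q i s = (if i \<le> k then w0 s else if i = Suc k then f * w0 s else 0)" for i s
  define \<beta> where "\<beta> v s = (if s \<in> A then Q (inv v) s else 0)" for v s
  have Qb: "0 \<le> Q i s \<and> Q i s \<le> w0 s" if "s \<in> S" for i s
    using w0nn[OF that] f01 mult_right_mono[of f 1 "w0 s"] unfolding Q_def by auto
  have attb: "is_attack V S w \<beta>"
    unfolding is_attack_def \<beta>_def using Qb wv w0nn by auto
  have sumQs: "(\<Sum>i\<in>{1..m}. Q i s) \<ge> \<theta>0 * (real m * w0 s)" if "s \<in> S" for s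
  proof -
    have "(\<Sum>i\<in>{1..m}. Q i s) = (if k < m then real k * w0 s + f * w0 s else real m * w0 s)"
      unfolding Q_def by (rule sumQ)
    moreover have "real k * w0 s + f * w0 s = \<theta>0 * (real m * w0 s)" using kf
      by (metis distrib_right mult.assoc)
    moreover have "\<theta>0 * (real m * w0 s) \<le> real m * w0 s"
      using mult_right_mono[OF th0(2), of "real m * w0 s"] w0nn[OF that] by simp
    ultimately show ?thesis by auto
  qed
  have sw: "(\<Sum>v\<in>V. w v s) = real m * w0 s" if "s \<in> S" for s
  proof -
    have "(\<Sum>v\<in>V. w v s) = (\<Sum>v\<in>V. w0 s)" using wv that by (intro sum.cong) auto
    then show ?thesis unfolding m_def by simp
  qed
  have AB: "A \<subseteq> attacked V S w \<theta> \<beta>"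
  proof
    fix s assume sA: "s \<in> A"
    then have sS: "s \<in> S" using AS by auto
    have "(\<Sum>v\<in>V. \<beta> v s) = (\<Sum>v\<in>V. Q (inv v) s)" using sA unfolding \<beta>_def by simp
    also have "\<dots> = (\<Sum>i\<in>{1..m}. Q i s)" by (rule sumV)
    finally have "(\<Sum>v\<in>V. \<beta> v s) \<ge> \<theta> s * (\<Sum>v\<in>V. w v s)"
      using sumQs[OF sS] sw[OF sS] ths[OF sS] by simp
    then show "s \<in> attacked V S w \<theta> \<beta>" using sS unfolding attacked_def by simp
  qed
  define B where "B = attacked V S w \<theta> \<beta>"
  have BS: "B \<subseteq> S" unfolding B_def attacked_def by auto
  have finB: "finite B" using BS finS finite_subset by blast
  have AB': "A \<subseteq> B" using AB B_def by simp
  define W where "W = (\<Sum>s\<in>A. w0 s)"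
  have Wnn: "0 \<le> W" unfolding W_def using w0nn AS by (intro sum_nonneg) auto
  have sumA: "(\<Sum>s\<in>A. Q i s) = (if i \<le> k then W else if i = Suc k then f * W else 0)" for i
    unfolding Q_def W_def by (simp add: sum_distrib_left)
  have sumB: "(\<Sum>s\<in>B. \<beta> v s) = (\<Sum>s\<in>A. Q (inv v) s)" for v
  proof -
    have "(\<Sum>s\<in>B. \<beta> v s) = (\<Sum>s\<in>A. \<beta> v s)"
      by (rule sum.mono_neutral_right[OF finB AB']) (auto simp: \<beta>_def)
    also have "\<dots> = (\<Sum>s\<in>A. Q (inv v) s)" unfolding \<beta>_def by simp
    finally show ?thesis .
  qed
  define G where "G i = (if i \<le> k then min \<sigma>0 W else if i = Suc k then min \<sigma>0 (f * W) else 0)" for i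
  have costb: "attack_cost V S \<sigma> w \<theta> \<beta> \<le> real k * min \<sigma>0 W + min \<sigma>0 (f * W)"
  proof -
    have "attack_cost V S \<sigma> w \<theta> \<beta> = (\<Sum>v\<in>V. G (inv v))"
      unfolding attack_cost_def B_def[symmetric]
      using sumB sumA sv s0pos by (intro sum.cong) (auto simp: G_def)
    also have "\<dots> = (\<Sum>i\<in>{1..m}. G i)" by (rule sumV)
    also have "\<dots> = (if k < m then real k * min \<sigma>0 W + min \<sigma>0 (f * W) else real m * min \<sigma>0 W)"
      unfolding G_def by (rule sumQ)
    also have "\<dots> \<le> real k * min \<sigma>0 W + min \<sigma>0 (f * W)"
      using km s0pos Wnn f01 by auto
    finally show ?thesis .
  qed
  define x where "x v = (\<Sum>s\<in>A. \<alpha> v s)" for v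
  have xb: "\<forall>v\<in>V. 0 \<le> x v \<and> x v \<le> W"
  proof
    fix v assume v: "v \<in> V"
    have "0 \<le> x v" unfolding x_def using isa v AS unfolding is_attack_def by (intro sum_nonneg) auto
    moreover have "x v \<le> W" unfolding x_def W_def
      using isa v AS wv unfolding is_attack_def by (intro sum_mono) auto
    ultimately show "0 \<le> x v \<and> x v \<le> W" by simp
  qed
  have xsum: "(real k + f) * W \<le> (\<Sum>v\<in>V. x v)"
  proof -
    have "(\<Sum>v\<in>V. x v) = (\<Sum>s\<in>A. \<Sum>v\<in>V. \<alpha> v s)" unfolding x_def by (rule sum.swap)
    moreover have "(\<Sum>s\<in>A. \<theta> s * (\<Sum>v\<in>V. w v s)) \<le> (\<Sum>s\<in>A. \<Sum>v\<in>V. \<alpha> v s)"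
      by (intro sum_mono) (auto simp: A_def attacked_def)
    moreover have "(\<Sum>s\<in>A. \<theta> s * (\<Sum>v\<in>V. w v s)) = (\<Sum>s\<in>A. \<theta>0 * real m * w0 s)"
      using AS ths sw by (intro sum.cong) auto
    moreover have "(\<Sum>s\<in>A. \<theta>0 * real m * w0 s) = (real k + f) * W"
      unfolding W_def kf by (simp add: sum_distrib_left)
    ultimately show ?thesis by linarith
  qed
  have costa': "attack_cost V S \<sigma> w \<theta> \<alpha> = (\<Sum>v\<in>V. min \<sigma>0 (x v))"
    unfolding attack_cost_def A_def[symmetric] x_def using sv by (intro sum.cong) auto
  have lbnd: "real k * min \<sigma>0 W + min \<sigma>0 (f * W) \<le> (\<Sum>v\<in>V. min \<sigma>0 (x v))"
    using lb[OF finV xb Wnn s0pos f01(1) _ xsum] f01(2) by simp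
  have prize: "attack_prize V S w \<theta> \<pi> \<alpha> \<le> attack_prize V S w \<theta> \<pi> \<beta>"
    unfolding attack_prize_def A_def[symmetric] B_def[symmetric]
    using ppos BS by (intro sum_mono2[OF finB AB']) (auto simp: less_imp_le subset_iff)
  have profb: "profitable V S \<sigma> w \<theta> \<pi> \<beta>"
    unfolding profitable_def using attb AB Ane costb lbnd costa costa' prize by auto
  have cons: "consolidated V S w \<theta> vs \<beta>"
    unfolding consolidated_def
  proof (intro ballI)
    fix s i assume sB: "s \<in> attacked V S w \<theta> \<beta>" and i: "i \<in> {1..card V}"
    have sS: "s \<in> S" using sB BS B_def by auto
    have im: "i \<in> {1..m}" using i m_def by simp
    have vsi: "vs i \<in> V" using bij_betw_apply[OF bij im] .
    have rhs: "(if i \<le> nat \<lfloor>\<theta> s * real (card V)\<rfloor> then w (vs i) s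
           else if i = nat \<lfloor>\<theta> s * real (card V)\<rfloor> + 1
             then (\<theta> s * real (card V) - of_int \<lfloor>\<theta> s * real (card V)\<rfloor>) * w (vs i) s
           else 0) = Q i s"
      unfolding Q_def k_def f_def ths[OF sS] wv[OF vsi sS] m_def by simp
    show "\<beta> (vs i) s = (if i \<le> nat \<lfloor>\<theta> s * real (card V)\<rfloor> then w (vs i) s
           else if i = nat \<lfloor>\<theta> s * real (card V)\<rfloor> + 1
             then (\<theta> s * real (card V) - of_int \<lfloor>\<theta> s * real (card V)\<rfloor>) * w (vs i) s
           else 0)"
    proof (cases "s \<in> A")
      case True
      then show ?thesis unfolding rhs \<beta>_def using inv_vs[OF im] by simp
    next
      case False
      have "(\<Sum>v\<in>V. \<beta> v s) = 0" using False unfolding \<beta>_def by simp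
      then have "\<theta>0 * (real m * w0 s) \<le> 0" using sB sS ths[OF sS] sw[OF sS] unfolding attacked_def by simp
      moreover have "0 \<le> \<theta>0 * (real m * w0 s)" using th0 w0nn[OF sS] by simp
      ultimately have "\<theta>0 * (real m * w0 s) = 0" by linarith
      then have "\<theta>0 = 0 \<or> w0 s = 0" using m1 by simp
      then have "Q i s = 0"
      proof
        assume "\<theta>0 = 0"
        then have "k = 0" "f = 0" unfolding k_def f_def by simp_all
        then show ?thesis using im unfolding Q_def by auto
      next
        assume "w0 s = 0" then show ?thesis unfolding Q_def by simp
      qed
      then show ?thesis unfolding rhs \<beta>_def using False by simp
    qed
  qed
  show ?thesis using profb cons by blast
qed

end
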